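(* Assume H1 and that at least one of H2, H3 holds. Let $W=W_q$ for some $q\in\mathbb{N}^*$ if H2 holds and $W=W_\alpha$ for some $\alpha<\eta$ if H3 holds. Then $\sup_{\theta\in\Theta}\{\pi_\theta(W)+\bar\pi_\theta(W)\}<+\infty$.
   Context: $\|\cdot\|$ Euclidean, $\Theta\subset\mathbb{R}^{d_\Theta}$ nonempty. $\mathtt{m}$-convex: $V(tx+(1-t)y)\le tV(x)+(1-t)V(y)-(\mathtt{m}/2)t(1-t)\|x-y\|^2$. H1: for every $\theta\in\Theta$ convex $V_\theta,\bar V_\theta,U_\theta,\bar U_\theta:\mathbb{R}^d\to[0,\infty)$ with (a) $\pi_\theta(x)\propto e^{-V_\theta(x)-U_\theta(x)}$, $\bar\pi_\theta(x)\propto e^{-\bar V_\theta(x)-\bar U_\theta(x)}$ probability densities and $\min(\inf_\theta\int e^{-V_\theta-U_\theta},\inf_\theta\int e^{-\bar V_\theta-\bar U_\theta})>0$; (b) $V_\theta,\bar V_\theta$ $C^1$ with $L$-Lipschitz gradients, and for each $\theta$ minimizers of $V_\theta,\bar V_\theta$ with norm $\le R_{V,1}$ and minimum values of absolute value $\le R_{V,2}$; (c) $U_\theta,\bar U_\theta$ $M$-Lipschitz with points of norm $\le R_{U,1}$ where $|U_\theta|,|\bar U_\theta|\le R_{U,2}$ (all constants independent of $\theta$). H2: there is $\mathtt{m}>0$ with $V_\theta,\bar V_\theta$ $\mathtt{m}$-convex for all $\theta$. H3: there are $\eta>0,c\ge0$ with $\min(U_\theta(x),\bar U_\theta(x))\ge\eta\|x\|-c$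 for all $\theta,x$. $W_q(x)=1+\|x\|^{2q}$, $W_\alpha(x)=\exp[\alpha\sqrt{1+\|x\|^2}]$; $\mu(W)=\int Wd\mu$. *)

theory Defs
  imports "HOL-Analysis.Analysis"
begin

definition m_convex :: "real \<Rightarrow> ('a::euclidean_space \<Rightarrow> real) \<Rightarrow> bool" where
  "m_convex m V \<longleftrightarrow> (\<forall>x y. \<forall>t\<in>{0..1}.
     V (t *\<^sub>R x + (1 - t) *\<^sub>R y) \<le> t * V x + (1 - t) * V y - (m / 2) * t * (1 - t) * (norm (x - y))\<^sup>2)"

text \<open>Moment pi(W) of the probability density proportional to exp(-H) w.r.t. Lebesgue measure.
  Computed as a nonnegative (possibly infinite) integral.\<close>
definition gibbs_moment :: "('a::euclidean_space \<Rightarrow> real) \<Rightarrow> ('a \<Rightarrow> real) \<Rightarrow> ennreal" where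
  "gibbs_moment H W =
     (\<integral>\<^sup>+ x. ennreal (W x * exp (- H x)) \<partial>lborel) / (\<integral>\<^sup>+ x. ennreal (exp (- H x)) \<partial>lborel)"

definition W_poly :: "nat \<Rightarrow> 'a::euclidean_space \<Rightarrow> real" where
  "W_poly q x = 1 + norm x ^ (2 * q)"

definition W_exp :: "real \<Rightarrow> 'a::euclidean_space \<Rightarrow> real" where
  "W_exp \<alpha> x = exp (\<alpha> * sqrt (1 + (norm x)\<^sup>2))"

definition H1 :: "'p set \<Rightarrow> ('p \<Rightarrow> 'a::euclidean_space \<Rightarrow> real) \<Rightarrow> ('p \<Rightarrow> 'a \<Rightarrow> real)
    \<Rightarrow> ('p \<Rightarrow> 'a \<Rightarrow> real) \<Rightarrow> ('p \<Rightarrow> 'a \<Rightarrow> real) \<Rightarrow> bool" where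
  "H1 \<Theta> V Vb U Ub \<longleftrightarrow>
    (\<forall>\<theta>\<in>\<Theta>. convex_on UNIV (V \<theta>) \<and> convex_on UNIV (Vb \<theta>) \<and> convex_on UNIV (U \<theta>) \<and> convex_on UNIV (Ub \<theta>)
       \<and> (\<forall>x. V \<theta> x \<ge> 0 \<and> Vb \<theta> x \<ge> 0 \<and> U \<theta> x \<ge> 0 \<and> Ub \<theta> x \<ge> 0))
    \<and> \<comment> \<open>(a) normalisable densities, normalising constants bounded below uniformly\<close>
    (\<exists>c>0. \<forall>\<theta>\<in>\<Theta>.
        ennreal c \<le> (\<integral>\<^sup>+ x. ennreal (exp (- V \<theta> x - U \<theta> x)) \<partial>lborel)
      \<and> (\<integral>\<^sup>+ x. ennreal (exp (- V \<theta> x - U \<theta> x)) \<partial>lborel) < \<infinity>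
      \<and> ennreal c \<le> (\<integral>\<^sup>+ x. ennreal (exp (- Vb \<theta> x - Ub \<theta> x)) \<partial>lborel)
      \<and> (\<integral>\<^sup>+ x. ennreal (exp (- Vb \<theta> x - Ub \<theta> x)) \<partial>lborel) < \<infinity>)
    \<and> \<comment> \<open>(b) C^1 with L-Lipschitz gradients; controlled minimisers\<close>
    (\<exists>L RV1 RV2. \<forall>\<theta>\<in>\<Theta>. \<forall>F\<in>{V \<theta>, Vb \<theta>}.
        (\<exists>G::'a \<Rightarrow> 'a. (\<forall>x. (F has_derivative (\<lambda>h. G x \<bullet> h)) (at x))
             \<and> continuous_on UNIV G
             \<and> (\<forall>x y. norm (G x - G y) \<le> L * norm (x - y)))
      \<and> (\<exists>x0. norm x0 \<le> RV1 \<and> (\<forall>x. F x0 \<le> F x) \<and> \<bar>F x0\<bar> \<le> RV2))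
    \<and> \<comment> \<open>(c) M-Lipschitz, with controlled points\<close>
    (\<exists>M RU1 RU2. \<forall>\<theta>\<in>\<Theta>. \<forall>F\<in>{U \<theta>, Ub \<theta>}.
        (\<forall>x y. \<bar>F x - F y\<bar> \<le> M * norm (x - y))
      \<and> (\<exists>x1. norm x1 \<le> RU1 \<and> \<bar>F x1\<bar> \<le> RU2))"

definition H2 :: "'p set \<Rightarrow> ('p \<Rightarrow> 'a::euclidean_space \<Rightarrow> real) \<Rightarrow> ('p \<Rightarrow> 'a \<Rightarrow> real) \<Rightarrow> real \<Rightarrow> bool" where
  "H2 \<Theta> V Vb m \<longleftrightarrow> m > 0 \<and> (\<forall>\<theta>\<in>\<Theta>. m_convex m (V \<theta>) \<and> m_convex m (Vb \<theta>))"

definition H3 :: "'p set \<Rightarrow> ('p \<Rightarrow> 'a::euclidean_space \<Rightarrow> real) \<Rightarrow> ('p \<Rightarrow> 'a \<Rightarrow> real) \<Rightarrow> real \<Rightarrow> real \<Rightarrow> bool" where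
  "H3 \<Theta> U Ub \<eta> c \<longleftrightarrow> \<eta> > 0 \<and> c \<ge> 0 \<and>
     (\<forall>\<theta>\<in>\<Theta>. \<forall>x. min (U \<theta> x) (Ub \<theta> x) \<ge> \<eta> * norm x - c)"

end

theory Submission
  imports Defs "HOL-Probability.Distributions"
begin

lemma exp_abs_1d_finite:
  fixes a :: real assumes a: "a > 0"
  shows "(\<integral>\<^sup>+ t. ennreal (exp (- a * \<bar>t\<bar>)) \<partial>lborel) < \<infinity>"
proof -
  have ed: "(\<integral>\<^sup>+ t. ennreal (exponential_density a t) \<partial>lborel) = 1"
    using nn_integral_erlang_ith_moment[OF a, where k=0 and i=0] by simp
  have edm: "(\<integral>\<^sup>+ t. ennreal (exponential_density a (- t)) \<partial>lborel) = 1"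
  proof -
    have "(\<integral>\<^sup>+ t. ennreal (exponential_density a t) \<partial>lborel)
        = ennreal \<bar>-1\<bar> * (\<integral>\<^sup>+ t. ennreal (exponential_density a (0 + (-1) * t)) \<partial>lborel)"
      by (rule nn_integral_real_affine) auto
    then show ?thesis using ed by simp
  qed
  have le: "ennreal (exp (- a * \<bar>t\<bar>)) \<le> ennreal (1/a) * (ennreal (exponential_density a t) + ennreal (exponential_density a (- t)))" for t
  proof -
    have "exp (- a * \<bar>t\<bar>) \<le> (1/a) * (exponential_density a t + exponential_density a (- t))"
      using a by (auto simp: exponential_density_def field_simps abs_if)
    then show ?thesis
      using a by (simp add: ennreal_mult[symmetric] ennreal_plus[symmetric] exponential_density_def del: ennreal_plus)
  qed
  have "(\<integral>\<^sup>+ t. ennreal (exp (- a * \<bar>t\<bar>)) \<partial>lborel)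
      \<le> (\<integral>\<^sup>+ t. ennreal (1/a) * (ennreal (exponential_density a t) + ennreal (exponential_density a (- t))) \<partial>lborel)"
    by (rule nn_integral_mono) (rule le)
  also have "\<dots> = ennreal (1/a) * ((\<integral>\<^sup>+ t. ennreal (exponential_density a t) \<partial>lborel) + (\<integral>\<^sup>+ t. ennreal (exponential_density a (- t)) \<partial>lborel))"
    by (subst nn_integral_cmult) (auto simp: nn_integral_add)
  also have "\<dots> = ennreal (1/a) * 2" using ed edm by simp
  finally show ?thesis by (simp add: order_le_less_trans ennreal_mult_less_top)
qed


lemma exp_norm_finite:
  fixes \<beta> :: real assumes b: "\<beta> > 0"
  shows "(\<integral>\<^sup>+ x. ennreal (exp (- \<beta> * norm (x::'a::euclidean_space))) \<partial>lborel) < \<infinity>"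
proof -
  define n where "n = real DIM('a)"
  have n: "n > 0" unfolding n_def by simp
  define a where "a = \<beta> / n"
  have a: "a > 0" using b n unfolding a_def by simp
  have pt: "ennreal (exp (- \<beta> * norm x)) \<le> (\<Prod>b\<in>Basis. ennreal (exp (- a * \<bar>x \<bullet> b\<bar>)))" for x :: 'a
  proof -
    have s: "(\<Sum>b\<in>(Basis::'a set). \<bar>x \<bullet> b\<bar>) \<le> n * norm x"
    proof -
      have "(\<Sum>b\<in>(Basis::'a set). \<bar>x \<bullet> b\<bar>) \<le> (\<Sum>b\<in>(Basis::'a set). norm x)"
        by (rule sum_mono) (simp add: Basis_le_norm)
      then show ?thesis by (simp add: n_def)
    qed
    have "exp (- \<beta> * norm x) \<le> exp (\<Sum>b\<in>(Basis::'a set). - a * \<bar>x \<bullet> b\<bar>)"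
    proof -
      have "(\<Sum>b\<in>(Basis::'a set). - a * \<bar>x \<bullet> b\<bar>) = - a * (\<Sum>b\<in>(Basis::'a set). \<bar>x \<bullet> b\<bar>)"
        by (simp add: sum_distrib_left)
      also have "\<dots> \<ge> - a * (n * norm x)" using s a by simp
      also have "- a * (n * norm x) = - \<beta> * norm x" using n by (simp add: a_def)
      finally show ?thesis by simp
    qed
    also have "\<dots> = (\<Prod>b\<in>Basis. exp (- a * \<bar>x \<bullet> b\<bar>))" by (simp add: exp_sum)
    finally show ?thesis by (simp add: prod_ennreal ennreal_leI)
  qed
  have "(\<integral>\<^sup>+ x. ennreal (exp (- \<beta> * norm (x::'a))) \<partial>lborel)
     \<le> (\<integral>\<^sup>+ x. (\<Prod>b\<in>Basis. ennreal (exp (- a * \<bar>(x::'a) \<bullet> b\<bar>))) \<partial>lborel)"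
    by (intro nn_integral_mono pt)
  also have "\<dots> = (\<Prod>b\<in>(Basis::'a set). (\<integral>\<^sup>+ t. ennreal (exp (- a * \<bar>t\<bar>)) \<partial>lborel))"
    by (rule nn_integral_lborel_prod) auto
  also have "\<dots> < \<infinity>"
    using exp_abs_1d_finite[OF a] by (simp add: power_less_top_ennreal)
  finally show ?thesis .
qed


lemma pow_le_fact_exp:
  fixes y :: real assumes "y \<ge> 0"
  shows "y ^ k \<le> fact k * exp y"
proof -
  have s: "summable (\<lambda>n. y^n /\<^sub>R fact n)" and e: "exp y = (\<Sum>n. y^n /\<^sub>R fact n)"
    using exp_converges[of y] by (auto simp: sums_iff)
  have "sum (\<lambda>n. y^n /\<^sub>R fact n) {k} \<le> (\<Sum>n. y^n /\<^sub>R fact n)"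
    by (rule sum_le_suminf[OF s]) (use assms in auto)
  then have "y^k / fact k \<le> exp y" using e by (simp add: divide_inverse mult.commute)
  then show ?thesis by (simp add: field_simps)
qed

lemma mconv_lower:
  assumes "m_convex m F" and "\<forall>x. F x0 \<le> F x"
  shows "F x \<ge> F x0 + (m/4) * (norm (x - x0))\<^sup>2"
proof -
  have "F ((1/2) *\<^sub>R x + (1 - 1/2) *\<^sub>R x0) \<le> (1/2) * F x + (1 - 1/2) * F x0 - (m / 2) * (1/2) * (1 - 1/2) * (norm (x - x0))\<^sup>2"
  proof -
    have h: "(1/2::real) \<in> {0..1}" by simp
    from assms(1) have "\<forall>x y. \<forall>t\<in>{0..1}. F (t *\<^sub>R x + (1 - t) *\<^sub>R y) \<le> t * F x + (1 - t) * F y - (m / 2) * t * (1 - t) * (norm (x - y))\<^sup>2"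
      unfolding m_convex_def .
    then show ?thesis using h by blast
  qed
  moreover have "F x0 \<le> F ((1/2) *\<^sub>R x + (1 - 1/2) *\<^sub>R x0)" using assms(2) by blast
  ultimately show ?thesis by simp
qed

lemma poly_bound:
  fixes x x0 :: "'a::euclidean_space"
  assumes m: "m > 0" and x0: "norm x0 \<le> R1" and F0: "F0 \<ge> - R2"
    and Fx: "Fx \<ge> F0 + (m/4) * (norm (x - x0))\<^sup>2" and G: "Gx \<ge> 0"
  shows "(1 + norm x ^ (2*q)) * exp (- (Fx + Gx)) \<le> (1 + fact (2*q)) * exp (2*R1 + R2 + 4/m) * exp (- 1 * norm x)"
proof -
  define d where "d = norm (x - x0)"
  have d0: "d \<ge> 0" unfolding d_def by simp
  have R1: "R1 \<ge> 0" using x0 norm_ge_zero order_trans by blast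
  have nx: "norm x \<le> d + R1" unfolding d_def using x0 norm_triangle_sub[of x x0]
    by linarith
  have "norm x ^ (2*q) \<le> (d + R1) ^ (2*q)" using nx by (simp add: power_mono)
  also have "\<dots> \<le> fact (2*q) * exp (d + R1)" using d0 R1 by (intro pow_le_fact_exp) simp
  finally have p0: "norm x ^ (2*q) \<le> fact (2*q) * exp (d + R1)" .
  have e1: "1 \<le> exp (d + R1)" using d0 R1 by simp
  have e2: "(1 + fact (2*q)) * exp (d + R1) = exp (d + R1) + fact (2*q) * exp (d + R1)"
    by (simp add: distrib_right)
  have p1: "1 + norm x ^ (2*q) \<le> (1 + fact (2*q)) * exp (d + R1)"
    using p0 e1 e2 by linarith
  have e1: "exp (- (Fx + Gx)) \<le> exp (R2 - (m/4) * d\<^sup>2)"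
    using Fx G F0 unfolding d_def by simp
  have q: "2 * d - (m/4) * d\<^sup>2 \<le> 4/m"
  proof -
    have "0 \<le> (m/4) * (d - 4/m)\<^sup>2" using m by simp
    also have "(m/4) * (d - 4/m)\<^sup>2 = (m/4)*d\<^sup>2 - 2 * d + 4/m" using m by (simp add: power2_eq_square field_simps)
    finally show ?thesis by simp
  qed
  have "(1 + norm x ^ (2*q)) * exp (- (Fx + Gx)) \<le> ((1 + fact (2*q)) * exp (d + R1)) * exp (R2 - (m/4) * d\<^sup>2)"
    by (intro mult_mono p1 e1) auto
  also have "\<dots> = (1 + fact (2*q)) * exp (d + R1 + R2 - (m/4) * d\<^sup>2)"
    by (simp add: exp_add[symmetric] algebra_simps)
  also have "\<dots> \<le> (1 + fact (2*q)) * exp (2*R1 + R2 + 4/m - norm x)"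
    using q nx by (intro mult_left_mono) auto
  also have "\<dots> = (1 + fact (2*q)) * exp (2*R1 + R2 + 4/m) * exp (- 1 * norm x)"
  proof -
    have "2*R1 + R2 + 4/m - norm x = (2*R1 + R2 + 4/m) + (- 1 * norm x)" by simp
    then show ?thesis by (simp only: mult.assoc mult_exp_exp)
  qed
  finally show ?thesis .
qed

lemma exp_bound:
  fixes x :: "'a::euclidean_space"
  assumes a: "\<alpha> < \<eta>" and Fx: "Fx \<ge> 0" and G: "Gx \<ge> \<eta> * norm x - c"
  shows "exp (\<alpha> * sqrt (1 + (norm x)\<^sup>2)) * exp (- (Fx + Gx)) \<le> exp (max \<alpha> 0 + c) * exp (- ((\<eta> - \<alpha>)/2) * norm x)"
proof -
  have sq1: "sqrt (1 + (norm x)\<^sup>2) \<le> 1 + norm x"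
    by (rule real_le_lsqrt) (auto simp: power2_eq_square algebra_simps)
  have sq2: "norm x \<le> sqrt (1 + (norm x)\<^sup>2)"
    by (rule real_le_rsqrt) simp
  have h: "\<alpha> * sqrt (1 + (norm x)\<^sup>2) \<le> max \<alpha> 0 + \<alpha> * norm x"
  proof (cases "\<alpha> \<ge> 0")
    case True then show ?thesis using mult_left_mono[OF sq1 True] by (simp add: algebra_simps)
  next
    case False then show ?thesis using mult_left_mono_neg[OF sq2, of \<alpha>] by simp
  qed
  have "\<alpha> * sqrt (1 + (norm x)\<^sup>2) - (Fx + Gx) \<le> max \<alpha> 0 + c - ((\<eta> - \<alpha>)/2) * norm x"
  proof -
    have e1: "(\<eta> - \<alpha>) * norm x = \<eta> * norm x - \<alpha> * norm x" by (simp add: algebra_simps)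
    have e2: "((\<eta> - \<alpha>)/2) * norm x \<le> (\<eta> - \<alpha>) * norm x"
      using a by (intro mult_right_mono) auto
    show ?thesis using h Fx G e1 e2 by linarith
  qed
  then have "exp (\<alpha> * sqrt (1 + (norm x)\<^sup>2) + (- (Fx + Gx))) \<le> exp ((max \<alpha> 0 + c) + (- ((\<eta> - \<alpha>)/2) * norm x))"
    by simp
  then show ?thesis by (simp only: mult_exp_exp)
qed


lemma gm_bound:
  fixes H :: "'p \<Rightarrow> 'a::euclidean_space \<Rightarrow> real" and W :: "'a \<Rightarrow> real"
  assumes b: "\<beta> > 0" and K: "K \<ge> 0" and c: "c > 0"
    and pt: "\<And>\<theta> x. \<theta> \<in> \<Theta> \<Longrightarrow> W x * exp (- H \<theta> x) \<le> K * exp (- \<beta> * norm x)"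
    and den: "\<And>\<theta>. \<theta> \<in> \<Theta> \<Longrightarrow> ennreal c \<le> (\<integral>\<^sup>+ x. ennreal (exp (- H \<theta> x)) \<partial>lborel)"
  shows "\<exists>B<\<infinity>. \<forall>\<theta>\<in>\<Theta>. gibbs_moment (H \<theta>) W \<le> B"
proof -
  define I where "I = (\<integral>\<^sup>+ x. ennreal (exp (- \<beta> * norm (x::'a))) \<partial>lborel)"
  have I: "I < \<infinity>" unfolding I_def by (rule exp_norm_finite[OF b])
  define B where "B = ennreal (K / c) * I"
  have "B < \<infinity>" unfolding B_def using I by (simp add: ennreal_mult_less_top)
  moreover have "gibbs_moment (H \<theta>) W \<le> B" if th: "\<theta> \<in> \<Theta>" for \<theta>
  proof -
    have "(\<integral>\<^sup>+ x. ennreal (W x * exp (- H \<theta> x)) \<partial>lborel) \<le> (\<integral>\<^sup>+ x. ennreal K * ennreal (exp (- \<beta> * norm (x::'a))) \<partial>lborel)"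
      by (intro nn_integral_mono) (use pt[OF th] K in \<open>auto simp: ennreal_mult[symmetric] intro: ennreal_leI\<close>)
    also have "\<dots> = ennreal K * I" unfolding I_def by (rule nn_integral_cmult) simp
    also have "\<dots> = ennreal c * B" unfolding B_def using c K
      by (simp add: mult.assoc[symmetric] ennreal_mult[symmetric])
    also have "\<dots> \<le> (\<integral>\<^sup>+ x. ennreal (exp (- H \<theta> x)) \<partial>lborel) * B"
      by (intro mult_right_mono den[OF th]) simp
    finally have num: "(\<integral>\<^sup>+ x. ennreal (W x * exp (- H \<theta> x)) \<partial>lborel) \<le> (\<integral>\<^sup>+ x. ennreal (exp (- H \<theta> x)) \<partial>lborel) * B" .
    have pos: "(\<integral>\<^sup>+ x. ennreal (exp (- H \<theta> x)) \<partial>lborel) > 0"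
      using den[OF th] c by (metis ennreal_eq_0_iff linorder_not_le not_gr_zero order_le_less_trans)
    show ?thesis unfolding gibbs_moment_def by (rule divide_le_posI_ennreal[OF pos num])
  qed
  ultimately show ?thesis by blast
qed

lemma sup_fin:
  assumes "\<exists>B<\<infinity>. \<forall>\<theta>\<in>\<Theta>. f \<theta> \<le> (B::ennreal)" and "\<exists>B<\<infinity>. \<forall>\<theta>\<in>\<Theta>. g \<theta> \<le> B"
  shows "(SUP \<theta>\<in>\<Theta>. f \<theta> + g \<theta>) < \<infinity>"
proof -
  obtain B1 B2 where b1: "B1 < \<infinity>" "\<forall>\<theta>\<in>\<Theta>. f \<theta> \<le> B1" and b2: "B2 < \<infinity>" "\<forall>\<theta>\<in>\<Theta>. g \<theta> \<le> B2"
    using assms by blast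
  have "(SUP \<theta>\<in>\<Theta>. f \<theta> + g \<theta>) \<le> B1 + B2"
    using b1 b2 by (intro SUP_least add_mono) auto
  also have "\<dots> < \<infinity>" using b1 b2 by simp
  finally show ?thesis .
qed


theorem lemma27:
  fixes \<Theta> :: "'p::euclidean_space set"
    and V Vb U Ub :: "'p \<Rightarrow> 'a::euclidean_space \<Rightarrow> real"
  assumes "\<Theta> \<noteq> {}"
    and "H1 \<Theta> V Vb U Ub"
  shows "(\<forall>m. H2 \<Theta> V Vb m \<longrightarrow> (\<forall>q::nat. q \<ge> 1 \<longrightarrow>
            (SUP \<theta>\<in>\<Theta>. gibbs_moment (\<lambda>x. V \<theta> x + U \<theta> x) (W_poly q)
                      + gibbs_moment (\<lambda>x. Vb \<theta> x + Ub \<theta> x) (W_poly q)) < \<infinity>))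
       \<and> (\<forall>\<eta> c. H3 \<Theta> U Ub \<eta> c \<longrightarrow> (\<forall>\<alpha>. \<alpha> < \<eta> \<longrightarrow>
            (SUP \<theta>\<in>\<Theta>. gibbs_moment (\<lambda>x. V \<theta> x + U \<theta> x) (W_exp \<alpha>)
                      + gibbs_moment (\<lambda>x. Vb \<theta> x + Ub \<theta> x) (W_exp \<alpha>)) < \<infinity>))"
proof -
  have nn: "\<And>\<theta> x. \<theta> \<in> \<Theta> \<Longrightarrow> V \<theta> x \<ge> 0 \<and> Vb \<theta> x \<ge> 0 \<and> U \<theta> x \<ge> 0 \<and> Ub \<theta> x \<ge> 0"
    using assms(2) unfolding H1_def by blast
  obtain c0 where c0: "c0 > 0" and
    d1: "\<And>\<theta>. \<theta> \<in> \<Theta> \<Longrightarrow> ennreal c0 \<le> (\<integral>\<^sup>+ x. ennreal (exp (- (V \<theta> x + U \<theta> x))) \<partial>lborel)" and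
    d2: "\<And>\<theta>. \<theta> \<in> \<Theta> \<Longrightarrow> ennreal c0 \<le> (\<integral>\<^sup>+ x. ennreal (exp (- (Vb \<theta> x + Ub \<theta> x))) \<partial>lborel)"
    using assms(2) unfolding H1_def by auto
  obtain RV1 RV2 where R: "\<And>\<theta> F. \<theta> \<in> \<Theta> \<Longrightarrow> F \<in> {V \<theta>, Vb \<theta>} \<Longrightarrow>
      (\<exists>x0. norm x0 \<le> RV1 \<and> (\<forall>x. F x0 \<le> F x) \<and> \<bar>F x0\<bar> \<le> RV2)"
    using assms(2) unfolding H1_def by metis
  have part1: "(SUP \<theta>\<in>\<Theta>. gibbs_moment (\<lambda>x. V \<theta> x + U \<theta> x) (W_poly q)
                      + gibbs_moment (\<lambda>x. Vb \<theta> x + Ub \<theta> x) (W_poly q)) < \<infinity>"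
    if h2: "H2 \<Theta> V Vb m" for m and q :: nat
  proof -
    have m: "m > 0" using h2 unfolding H2_def by simp
    define K where "K = (1 + fact (2*q)) * exp (2*RV1 + RV2 + 4/m)"
    have K: "K \<ge> 0" unfolding K_def by (intro mult_nonneg_nonneg) auto
    have pb: "W_poly q x * exp (- (F x + G x)) \<le> K * exp (- 1 * norm x)"
      if F: "m_convex m F" "F \<in> {V \<theta>, Vb \<theta>}" and G: "G x \<ge> 0" and th: "\<theta> \<in> \<Theta>" for F G \<theta> x
    proof -
      obtain x0 where x0: "norm x0 \<le> RV1" "\<forall>x. F x0 \<le> F x" "\<bar>F x0\<bar> \<le> RV2"
        using R[OF th F(2)] by blast
      show ?thesis unfolding W_poly_def K_def
        by (rule poly_bound[OF m x0(1) _ mconv_lower[OF F(1) x0(2)] G]) (use x0(3) in linarith)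
    qed
    have b1: "\<exists>B<\<infinity>. \<forall>\<theta>\<in>\<Theta>. gibbs_moment (\<lambda>x. V \<theta> x + U \<theta> x) (W_poly q) \<le> B"
    proof -
      have pt: "W_poly q x * exp (- (V \<theta> x + U \<theta> x)) \<le> K * exp (- 1 * norm x)" if th: "\<theta> \<in> \<Theta>" for \<theta> x
        by (rule pb) (use h2 th nn in \<open>auto simp: H2_def\<close>)
      show ?thesis by (rule gm_bound[where H="\<lambda>\<theta> x. V \<theta> x + U \<theta> x" and \<beta>=1, OF _ K c0 pt d1]) simp
    qed
    have b2: "\<exists>B<\<infinity>. \<forall>\<theta>\<in>\<Theta>. gibbs_moment (\<lambda>x. Vb \<theta> x + Ub \<theta> x) (W_poly q) \<le> B"
    proof -
      have pt: "W_poly q x * exp (- (Vb \<theta> x + Ub \<theta> x)) \<le> K * exp (- 1 * norm x)" if th: "\<theta> \<in> \<Theta>" for \<theta> x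
        by (rule pb) (use h2 th nn in \<open>auto simp: H2_def\<close>)
      show ?thesis by (rule gm_bound[where H="\<lambda>\<theta> x. Vb \<theta> x + Ub \<theta> x" and \<beta>=1, OF _ K c0 pt d2]) simp
    qed
    show ?thesis by (rule sup_fin[OF b1 b2])
  qed
  have part2: "(SUP \<theta>\<in>\<Theta>. gibbs_moment (\<lambda>x. V \<theta> x + U \<theta> x) (W_exp \<alpha>)
                      + gibbs_moment (\<lambda>x. Vb \<theta> x + Ub \<theta> x) (W_exp \<alpha>)) < \<infinity>"
    if h3: "H3 \<Theta> U Ub \<eta> c" and a: "\<alpha> < \<eta>" for \<eta> c \<alpha>
  proof -
    have G: "\<And>\<theta> x. \<theta> \<in> \<Theta> \<Longrightarrow> U \<theta> x \<ge> \<eta> * norm x - c \<and> Ub \<theta> x \<ge> \<eta> * norm x - c"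
      using h3 unfolding H3_def by auto
    have bpos: "(\<eta> - \<alpha>)/2 > 0" using a by simp
    have K: "exp (max \<alpha> 0 + c) \<ge> 0" by simp
    have pe: "W_exp \<alpha> x * exp (- (F x + Gf x)) \<le> exp (max \<alpha> 0 + c) * exp (- ((\<eta> - \<alpha>)/2) * norm x)"
      if "F x \<ge> 0" "Gf x \<ge> \<eta> * norm x - c" for F Gf and x :: 'a
      unfolding W_exp_def by (rule exp_bound[OF a that])
    have b1: "\<exists>B<\<infinity>. \<forall>\<theta>\<in>\<Theta>. gibbs_moment (\<lambda>x. V \<theta> x + U \<theta> x) (W_exp \<alpha>) \<le> B"
      by (rule gm_bound[where H="\<lambda>\<theta> x. V \<theta> x + U \<theta> x", OF bpos K c0])
         (use pe nn G d1 in \<open>auto\<close>)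
    have b2: "\<exists>B<\<infinity>. \<forall>\<theta>\<in>\<Theta>. gibbs_moment (\<lambda>x. Vb \<theta> x + Ub \<theta> x) (W_exp \<alpha>) \<le> B"
      by (rule gm_bound[where H="\<lambda>\<theta> x. Vb \<theta> x + Ub \<theta> x", OF bpos K c0])
         (use pe nn G d2 in \<open>auto\<close>)
    show ?thesis by (rule sup_fin[OF b1 b2])
  qed
  show ?thesis using part1 part2 by blast
qed

end
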